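(* Let $\mathcal A=(Q,\Sigma,\delta,\rho)$ be a connected bireversible Mealy automaton whose labeled orbit tree $\mathfrak t(\mathcal A)$ has no active self-liftable branch, and let $\mathfrak j=\mathfrak j(\mathbf e)$ be a jungle tree whose trunk $\mathbf e$ has length $n$ and edge labels $k_1,\dots,k_n$ (from the root down). Then for every $i\in\{0,\dots,n\}$ and every $\mathbf u\in Q^i$ which is a prefix of some stem, the number of stems of $\mathfrak j$ with prefix $\mathbf u$ equals $k_{i+1}k_{i+2}\cdots k_n$ (in particular it depends only on $i$).
   Context: Mealy automata. A Mealy automaton is $\mathcal A=(Q,\Sigma,\delta,\rho)$ with $Q,\Sigma$ finite non-empty sets, $\delta=(\delta_i\colon Q\to Q)_{i\in\Sigma}$, $\rho=(\rho_x\colon\Sigma\to\Sigma)_{x\in Q}$; transitions $x\xrightarrow{i\mid\rho_x(i)}\delta_i(x)$. Invertible: each $\rho_x$ a permutation of $\Sigma$; reversible: each $\delta_i$ a permutation of $Q$; bireversible: invertible, reversible, and for each $j\in\Sigma$ the map $x\mapsto\delta_{\rho_x^{-1}(j)}(x)$ is a permutation of $Q$. Connected: the directed graph on $Q$ with edges $x\to\delta_i(x)$ is connected. Extensions: $\rho_x(i\mathbf s)=\rho_x(i)\rho_{\delta_i(x)}(\mathbf s)$; $\rho_{x_1\cdots x_m}=\rho_{x_m}\circ\cdots\circ\rho_{x_1}$; $\delta_i(x\mathbf u)=\delta_i(x)\delta_{\rho_x(i)}(\mathbf u)$ on $Q^*$, $\delta_{i_1\cdots i_m}=\delta_{i_m}\circ\cdots\circ\delta_{i_1}$.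 The connected components of $\mathcal A^n$ (stateset $Q^n$, transitions $\mathbf u\xrightarrow{i\mid\rho_{\mathbf u}(i)}\delta_i(\mathbf u)$) are, for reversible $\mathcal A$, the orbits of $Q^n$ under the maps $\delta_{\mathbf s}$. Orbit tree $\mathfrak t(\mathcal A)$: vertices at level $n\ge0$ are the connected components of $\mathcal A^n$; an edge from the component of $\mathbf u\in Q^n$ to that of $\mathbf ux$ for all $\mathbf u,x$; edge $C\to D$ labeled $\#D/\#C$. $\top,\bot$ = first/last vertex of a downward path; level of an edge/path = level of its top vertex. A word of $Q^*\cup Q^\omega$ represents the initial path through the components of its prefixes. Edge $e$ is liftable to $f$ if every word of $\bot(e)$ has a suffix in $\bot(f)$; paths are liftable if corresponding edges are. $f$ is a legitimate child of $e$ if $\top(f)=\bot(e)$ and $f$ is liftable to $e$. A path/subtree $\mathfrak s$ is $k$-self-liftable if for all $i\ge0$ every path in $\mathfrak s$ starting at level $i+k$ is liftable to a path in $\mathfrak s$ starting at level $i$; self-liftable if $k$-self-liftable for some $k>0$. A branch (infinite initial path) is active if its labels are not eventually all $1$. Jungle trees: for a finite 1-self-liftable initial path $\mathbf e$ of length $n$ whose last edge has at least two legitimate children, all labeled $1$, $\mathfrak j(\mathbf e)$ consists of $\mathbf e$ (the trunk) plus all edges descending from $\bot(\mathbf e)$ that are liftable to the last edge of $\mathbf e$. Stems: the words of $\bot(\mathbf e)\subseteq Q^n$. *)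

theory Defs
  imports Complex_Main "HOL-Library.Sublist"
begin

record ('q, 'a) mealy =
  states :: "'q set"
  alph   :: "'a set"
  trans  :: "'a \<Rightarrow> 'q \<Rightarrow> 'q"    (* delta_i x *)
  outp   :: "'q \<Rightarrow> 'a \<Rightarrow> 'a"    (* rho_x i *)

definition mealy :: "('q, 'a) mealy \<Rightarrow> bool" where
  "mealy A \<longleftrightarrow> finite (states A) \<and> states A \<noteq> {} \<and> finite (alph A) \<and> alph A \<noteq> {}
     \<and> (\<forall>i\<in>alph A. \<forall>x\<in>states A. trans A i x \<in> states A)
     \<and> (\<forall>x\<in>states A. \<forall>i\<in>alph A. outp A x i \<in> alph A)"

definition invertible :: "('q, 'a) mealy \<Rightarrow> bool" where
  "invertible A \<longleftrightarrow> (\<forall>x\<in>states A. bij_betw (outp A x) (alph A) (alph A))"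

definition reversible :: "('q, 'a) mealy \<Rightarrow> bool" where
  "reversible A \<longleftrightarrow> (\<forall>i\<in>alph A. bij_betw (trans A i) (states A) (states A))"

definition bireversible :: "('q, 'a) mealy \<Rightarrow> bool" where
  "bireversible A \<longleftrightarrow> invertible A \<and> reversible A \<and>
     (\<forall>j\<in>alph A. bij_betw (\<lambda>x. trans A (inv_into (alph A) (outp A x) j) x) (states A) (states A))"

definition connected_mealy :: "('q, 'a) mealy \<Rightarrow> bool" where
  "connected_mealy A \<longleftrightarrow>
     (let E = {(x, trans A i x) | x i. x \<in> states A \<and> i \<in> alph A}
      in \<forall>x\<in>states A. \<forall>y\<in>states A. (x, y) \<in> (E \<union> E\<inverse>)\<^sup>*)"

definition words :: "('q, 'a) mealy \<Rightarrow> nat \<Rightarrow> 'q list set" where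
  "words A n = {u. set u \<subseteq> states A \<and> length u = n}"

fun deltaw :: "('q, 'a) mealy \<Rightarrow> 'a \<Rightarrow> 'q list \<Rightarrow> 'q list" where
  "deltaw A i [] = []"
| "deltaw A i (x # u) = trans A i x # deltaw A (outp A x i) u"

definition edges_pow :: "('q, 'a) mealy \<Rightarrow> nat \<Rightarrow> ('q list \<times> 'q list) set" where
  "edges_pow A n = {(u, deltaw A i u) | u i. u \<in> words A n \<and> i \<in> alph A}"

definition comp :: "('q, 'a) mealy \<Rightarrow> nat \<Rightarrow> 'q list \<Rightarrow> 'q list set" where
  "comp A n u = {v \<in> words A n. (u, v) \<in> (edges_pow A n \<union> (edges_pow A n)\<inverse>)\<^sup>*}"

definition vertex :: "('q, 'a) mealy \<Rightarrow> nat \<Rightarrow> 'q list set \<Rightarrow> bool" where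
  "vertex A n C \<longleftrightarrow> (\<exists>u\<in>words A n. C = comp A n u)"

definition tedge :: "('q, 'a) mealy \<Rightarrow> nat \<Rightarrow> 'q list set \<Rightarrow> 'q list set \<Rightarrow> bool" where
  "tedge A n C D \<longleftrightarrow> vertex A n C \<and> vertex A (Suc n) D \<and>
     (\<exists>u\<in>C. \<exists>x\<in>states A. u @ [x] \<in> D)"

definition label :: "'q list set \<Rightarrow> 'q list set \<Rightarrow> rat" where
  "label C D = of_nat (card D) / of_nat (card C)"

text \<open>An edge is represented by the pair (top vertex, bottom vertex).
  Edge e is liftable to f if every word of bot(e) has a suffix in bot(f).\<close>
definition edge_liftable :: "'q list set \<times> 'q list set \<Rightarrow> 'q list set \<times> 'q list set \<Rightarrow> bool" where
  "edge_liftable e f \<longleftrightarrow> (\<forall>w\<in>snd e. \<exists>t v. w = t @ v \<and> v \<in> snd f)"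

text \<open>Initial paths are given by their sequence of vertices P 0, P 1, ...;
  the edge at level j is (P j, P (j+1)).\<close>
definition initial_path :: "('q, 'a) mealy \<Rightarrow> nat \<Rightarrow> (nat \<Rightarrow> 'q list set) \<Rightarrow> bool" where
  "initial_path A n P \<longleftrightarrow> P 0 = comp A 0 [] \<and> (\<forall>j<n. tedge A j (P j) (P (Suc j)))"

definition branch :: "('q, 'a) mealy \<Rightarrow> (nat \<Rightarrow> 'q list set) \<Rightarrow> bool" where
  "branch A B \<longleftrightarrow> B 0 = comp A 0 [] \<and> (\<forall>j. tedge A j (B j) (B (Suc j)))"

definition subpath_liftable :: "(nat \<Rightarrow> 'q list set) \<Rightarrow> nat \<Rightarrow> nat \<Rightarrow> nat \<Rightarrow> bool" where
  "subpath_liftable P a b m \<longleftrightarrow>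
     (\<forall>j<m. edge_liftable (P (a + j), P (Suc (a + j))) (P (b + j), P (Suc (b + j))))"

definition self_liftable_k_fin :: "nat \<Rightarrow> nat \<Rightarrow> (nat \<Rightarrow> 'q list set) \<Rightarrow> bool" where
  "self_liftable_k_fin k n P \<longleftrightarrow>
     (\<forall>i m. i + k + m \<le> n \<longrightarrow> subpath_liftable P (i + k) i m)"

definition self_liftable_k_inf :: "nat \<Rightarrow> (nat \<Rightarrow> 'q list set) \<Rightarrow> bool" where
  "self_liftable_k_inf k B \<longleftrightarrow> (\<forall>i m. subpath_liftable B (i + k) i m)"

definition self_liftable_branch :: "(nat \<Rightarrow> 'q list set) \<Rightarrow> bool" where
  "self_liftable_branch B \<longleftrightarrow> (\<exists>k>0. self_liftable_k_inf k B)"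

definition active :: "(nat \<Rightarrow> 'q list set) \<Rightarrow> bool" where
  "active B \<longleftrightarrow> \<not> (\<exists>N. \<forall>j\<ge>N. label (B j) (B (Suc j)) = 1)"

definition no_active_self_liftable_branch :: "('q, 'a) mealy \<Rightarrow> bool" where
  "no_active_self_liftable_branch A \<longleftrightarrow>
     \<not> (\<exists>B. branch A B \<and> active B \<and> self_liftable_branch B)"

definition legit_children :: "('q, 'a) mealy \<Rightarrow> nat \<Rightarrow> (nat \<Rightarrow> 'q list set) \<Rightarrow> 'q list set set" where
  "legit_children A n P =
     {F. tedge A n (P n) F \<and> edge_liftable (P n, F) (P (n - 1), P n)}"

definition jungle_trunk :: "('q, 'a) mealy \<Rightarrow> nat \<Rightarrow> (nat \<Rightarrow> 'q list set) \<Rightarrow> bool" where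
  "jungle_trunk A n P \<longleftrightarrow> 0 < n \<and> initial_path A n P \<and> self_liftable_k_fin 1 n P \<and>
     2 \<le> card (legit_children A n P) \<and> (\<forall>F\<in>legit_children A n P. label (P n) F = 1)"

definition stems :: "nat \<Rightarrow> (nat \<Rightarrow> 'q list set) \<Rightarrow> 'q list set" where
  "stems n P = P n"

end

theory Submission
  imports Defs
begin

lemma deltaw_length[simp]: "length (deltaw A a u) = length u"
  by (induction u arbitrary: a) auto

lemma deltaw_take: "take j (deltaw A a u) = deltaw A a (take j u)"
  by (induction u arbitrary: a j) (auto split: nat.splits simp: take_Cons')

lemma deltaw_words:
  assumes "mealy A" "a \<in> alph A" "u \<in> words A m"
  shows "deltaw A a u \<in> words A m"
  using assms(2,3)
proof (induction u arbitrary: a m)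
  case Nil then show ?case by (simp add: words_def)
next
  case (Cons x u)
  then have x: "x \<in> states A" and u: "u \<in> words A (m - 1)" and m: "m = Suc (length u)"
    by (auto simp: words_def)
  have "outp A x a \<in> alph A" using assms(1) x Cons.prems(1) by (auto simp: mealy_def)
  from Cons.IH[OF this u] have "deltaw A (outp A x a) u \<in> words A (m-1)" .
  moreover have "trans A a x \<in> states A" using assms(1) x Cons.prems(1) by (auto simp: mealy_def)
  ultimately show ?case using m by (auto simp: words_def)
qed

lemma deltaw_inj_aux:
  assumes "mealy A" "reversible A"
  shows "a \<in> alph A \<Longrightarrow> set u \<subseteq> states A \<Longrightarrow> set v \<subseteq> states A \<Longrightarrow> length u = length v
     \<Longrightarrow> deltaw A a u = deltaw A a v \<Longrightarrow> u = v"
proof (induction u arbitrary: a v)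
  case Nil then show ?case by simp
next
  case (Cons x u)
  then obtain y v' where v: "v = y # v'" by (cases v) auto
  from Cons.prems v have "trans A a x = trans A a y" by simp
  moreover have "inj_on (trans A a) (states A)"
    using assms(2) Cons.prems(1) by (auto simp: reversible_def bij_betw_def)
  ultimately have xy: "x = y" using Cons.prems v by (auto simp: inj_on_def)
  have "outp A x a \<in> alph A" using assms(1) Cons.prems by (auto simp: mealy_def)
  then have "u = v'" using Cons.IH[of "outp A x a" v'] Cons.prems v xy by auto
  then show ?case using xy v by simp
qed

lemma deltaw_inj:
  assumes "mealy A" "reversible A" "a \<in> alph A"
  shows "inj_on (deltaw A a) (words A m)"
  using deltaw_inj_aux[OF assms(1,2) assms(3)] by (auto simp: inj_on_def words_def)

lemma finite_words: "mealy A \<Longrightarrow> finite (words A m)"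
  unfolding words_def mealy_def using finite_lists_length_eq by auto

lemma deltaw_bij:
  assumes "mealy A" "reversible A" "a \<in> alph A"
  shows "bij_betw (deltaw A a) (words A m) (words A m)"
proof -
  have "deltaw A a ` words A m \<subseteq> words A m" using deltaw_words[OF assms(1,3)] by auto
  then have "deltaw A a ` words A m = words A m"
    using endo_inj_surj finite_words[OF assms(1)] deltaw_inj[OF assms] by blast
  then show ?thesis using deltaw_inj[OF assms] by (simp add: bij_betw_def)
qed

lemma R_sym:
  assumes "(a, b) \<in> (E \<union> E\<inverse>)\<^sup>*"
  shows "(b, a) \<in> (E \<union> E\<inverse>)\<^sup>*"
proof -
  have "sym (E \<union> E\<inverse>)" by (auto simp: sym_def)
  then have "sym ((E \<union> E\<inverse>)\<^sup>*)" by (rule sym_rtrancl)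
  then show ?thesis using assms by (auto simp: sym_def)
qed

lemma comp_eq:
  assumes "a \<in> words A m" "b \<in> comp A m a"
  shows "comp A m b = comp A m a"
proof -
  have ab: "(a, b) \<in> (edges_pow A m \<union> (edges_pow A m)\<inverse>)\<^sup>*" using assms(2) by (simp add: comp_def)
  have ba: "(b, a) \<in> (edges_pow A m \<union> (edges_pow A m)\<inverse>)\<^sup>*" using R_sym[OF ab] .
  show ?thesis unfolding comp_def
    using rtrancl_trans[OF ab] rtrancl_trans[OF ba] by blast
qed

lemma R_take:
  assumes "(a, b) \<in> (edges_pow A m \<union> (edges_pow A m)\<inverse>)\<^sup>*" "j \<le> m"
  shows "(take j a, take j b) \<in> (edges_pow A j \<union> (edges_pow A j)\<inverse>)\<^sup>*"
  using assms(1)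
proof induction
  case base then show ?case by simp
next
  case (step y z)
  have tw: "\<And>u. u \<in> words A m \<Longrightarrow> take j u \<in> words A j"
    using assms(2) by (auto simp: words_def dest: in_set_takeD)
  from step.hyps(2) have "(take j y, take j z) \<in> edges_pow A j \<union> (edges_pow A j)\<inverse>"
    by (auto simp: edges_pow_def deltaw_take intro!: tw)
  then show ?case using step.IH by (rule rtrancl_into_rtrancl[rotated])
qed

lemma comp_take:
  assumes "v \<in> comp A m a" "j \<le> m"
  shows "take j v \<in> comp A j (take j a)"
  using assms R_take[of a v A m j]
  by (auto simp: comp_def words_def dest: in_set_takeD)

lemma vertex_words: "vertex A m C \<Longrightarrow> C \<subseteq> words A m"
  by (auto simp: vertex_def comp_def)

lemma telescope:
  fixes f :: "nat \<Rightarrow> nat"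
  assumes "\<forall>j\<le>n. f j > 0" "i \<le> n"
  shows "(\<Prod>j\<in>{Suc i..n}. (of_nat (f j) / of_nat (f (j - 1)) :: rat)) = of_nat (f n) / of_nat (f i)"
  using assms
proof (induction n)
  case 0 then show ?case by simp
next
  case (Suc n)
  show ?case
  proof (cases "i = Suc n")
    case True then show ?thesis using Suc.prems by simp
  next
    case False
    then have i: "i \<le> n" using Suc.prems by simp
    have "{Suc i..Suc n} = insert (Suc n) {Suc i..n}" using i by auto
    then have "(\<Prod>j\<in>{Suc i..Suc n}. (of_nat (f j) / of_nat (f (j - 1)) :: rat))
       = (of_nat (f (Suc n)) / of_nat (f n)) * (of_nat (f n) / of_nat (f i))"
      using Suc.IH[OF _ i] Suc.prems by simp
    also have "\<dots> = of_nat (f (Suc n)) / of_nat (f i)" using Suc.prems by simp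
    finally show ?thesis .
  qed
qed

theorem lemma5p12:
  fixes A :: "('q, 'a) mealy" and n :: nat and P :: "nat \<Rightarrow> 'q list set"
  assumes "mealy A"
    and "connected_mealy A"
    and "bireversible A"
    and "no_active_self_liftable_branch A"
    and "jungle_trunk A n P"
  shows "\<forall>i\<le>n. \<forall>u\<in>words A i. (\<exists>w\<in>stems n P. prefix u w) \<longrightarrow>
           of_nat (card {w \<in> stems n P. prefix u w}) = (\<Prod>j\<in>{Suc i..n}. label (P (j - 1)) (P j))"
proof (intro allI impI ballI)
  fix i u assume iu: "i \<le> n" "u \<in> words A i" "\<exists>w\<in>stems n P. prefix u w"
  have rev: "reversible A" using assms(3) by (simp add: bireversible_def)
  have n0: "0 < n" and ip: "initial_path A n P" using assms(5) by (auto simp: jungle_trunk_def)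
  have vert: "vertex A j (P j)" if "j \<le> n" for j
  proof (cases j)
    case 0 then show ?thesis using ip by (auto simp: initial_path_def vertex_def words_def)
  next
    case (Suc k) then show ?thesis using ip that by (auto simp: initial_path_def tedge_def)
  qed
  have fin: "finite (P j)" if "j \<le> n" for j
    using vertex_words[OF vert[OF that]] finite_words[OF assms(1)] finite_subset by blast
  have Pcomp: "P j = comp A j a" if jn: "j \<le> n" and aP: "a \<in> P j" for j a
  proof -
    obtain b where b: "b \<in> words A j" "P j = comp A j b" using vert[OF jn] by (auto simp: vertex_def)
    then show ?thesis using comp_eq[OF b(1)] aP by simp
  qed
  have down: "take j w \<in> P j" if "w \<in> P n" "j \<le> n" for w j
    using that(2)
  proof (induction j rule: inc_induct)
    case base then show ?case using that(1) vertex_words[OF vert[of n]] by (auto simp: words_def)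
  next
    case (step k)
    have "tedge A k (P k) (P (Suc k))" using ip step.hyps(2) by (auto simp: initial_path_def)
    then obtain v x where vx: "v \<in> P k" "v @ [x] \<in> P (Suc k)" by (auto simp: tedge_def)
    have lv: "length v = k" using vx(1) vertex_words[OF vert[of k]] step.hyps by (auto simp: words_def)
    have "P (Suc k) = comp A (Suc k) (v @ [x])" using Pcomp[OF _ vx(2)] step.hyps by simp
    then have "take k (take (Suc k) w) \<in> comp A k (take k (v @ [x]))"
      using comp_take[of "take (Suc k) w" A "Suc k" "v @ [x]" k] step.IH by simp
    moreover have "comp A k (take k (v @ [x])) = P k" using lv Pcomp[OF _ vx(1)] step.hyps by simp
    ultimately show ?case by (simp add: min_def)
  qed
  obtain w0 where w0: "w0 \<in> P n" "prefix u w0" using iu(3) by (auto simp: stems_def)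
  have lu: "length u = i" using iu(2) by (simp add: words_def)
  have lenP: "length w = j" if "w \<in> P j" "j \<le> n" for w j
    using vertex_words[OF vert[OF that(2)]] that(1) by (auto simp: words_def)
  have uPi: "u \<in> P i"
    using down[OF w0(1) iu(1)] w0(2) lu by (metis prefix_def append_eq_conv_conj)
  define S where "S v = {w \<in> P n. prefix v w}" for v
  have finS: "finite (S v)" for v using fin[of n] by (simp add: S_def)
  have mono: "card (S v) \<le> card (S (deltaw A a v))" if "a \<in> alph A" for v a
  proof (rule card_inj_on_le[OF _ _ finS])
    show "inj_on (deltaw A a) (S v)"
      using deltaw_inj[OF assms(1) rev that, of n] vertex_words[OF vert[of n]]
      by (auto simp: S_def intro: inj_on_subset)
    show "deltaw A a ` S v \<subseteq> S (deltaw A a v)"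
    proof
      fix z assume "z \<in> deltaw A a ` S v"
      then obtain w where w: "w \<in> P n" "prefix v w" "z = deltaw A a w" by (auto simp: S_def)
      have ww: "w \<in> words A n" using w(1) vertex_words[OF vert[of n]] by auto
      have "(w, z) \<in> edges_pow A n" using ww that w(3) by (auto simp: edges_pow_def)
      then have "z \<in> comp A n w"
        using deltaw_words[OF assms(1) that ww] w(3) by (auto simp: comp_def)
      then have "z \<in> P n" using Pcomp[OF _ w(1)] by simp
      moreover have "take (length v) z = deltaw A a v"
        using w(2,3) by (auto simp: deltaw_take prefix_def)
      then have "prefix (deltaw A a v) z" by (metis take_is_prefix)
      ultimately show "z \<in> S (deltaw A a v)" by (simp add: S_def)
    qed
  qed
  have eqc: "card (S v) = card (S (deltaw A a v))" if "a \<in> alph A" "v \<in> words A i" for v a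
  proof -
    have bij: "bij_betw (deltaw A a) (words A i) (words A i)" using deltaw_bij[OF assms(1) rev that(1)] .
    have "(\<Sum>v\<in>words A i. card (S v)) = (\<Sum>v\<in>words A i. card (S (deltaw A a v)))"
      using sum.reindex_bij_betw[OF bij, of "\<lambda>v. card (S v)"] by simp
    then show ?thesis
      using sum_mono_inv[of "\<lambda>v. card (S v)" "words A i" "\<lambda>v. card (S (deltaw A a v))" v]
        mono[OF that(1)] that(2) finite_words[OF assms(1)] by auto
  qed
  have const: "card (S v) = card (S u)" if "v \<in> P i" for v
  proof -
    have "(u, v) \<in> (edges_pow A i \<union> (edges_pow A i)\<inverse>)\<^sup>*"
      using that Pcomp[OF iu(1) uPi] by (simp add: comp_def)
    then show ?thesis
    proof induction
      case base then show ?case by simp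
    next
      case (step y z)
      from step.hyps(2) have "card (S y) = card (S z)"
        by (auto simp: edges_pow_def eqc)
      then show ?case using step.IH by simp
    qed
  qed
  have Su: "card (S u) > 0" using w0 finS[of u] by (auto simp: S_def card_gt_0_iff)
  have Sv: "S v = {w \<in> P n. take i w = v}" if "v \<in> P i" for v
    using lenP[OF that iu(1)] lenP[OF _ order_refl] iu(1)
    by (auto simp: S_def prefix_def) (metis append_eq_conv_conj)+
  have union: "P n = (\<Union>v\<in>P i. S v)"
    using down[OF _ iu(1)] by (auto simp: Sv)
  have "card (P n) = (\<Sum>v\<in>P i. card (S v))"
    unfolding union
    by (rule card_UN_disjoint) (auto simp: fin iu(1) finS Sv)
  also have "\<dots> = card (P i) * card (S u)" using const by simp
  finally have cn: "card (P n) = card (P i) * card (S u)" .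
  have pos: "\<forall>j\<le>n. card (P j) > 0"
  proof (intro allI impI)
    fix j assume "j \<le> n"
    then have "take j w0 \<in> P j" using down w0(1) by simp
    then show "card (P j) > 0" using fin[OF \<open>j \<le> n\<close>] by (auto simp: card_gt_0_iff)
  qed
  have "(\<Prod>j\<in>{Suc i..n}. label (P (j - 1)) (P j)) = of_nat (card (P n)) / of_nat (card (P i))"
    unfolding label_def using telescope[of n "\<lambda>j. card (P j)" i] pos iu(1) by simp
  also have "\<dots> = of_nat (card (S u))" using cn pos iu(1) by simp
  finally show "of_nat (card {w \<in> stems n P. prefix u w}) = (\<Prod>j\<in>{Suc i..n}. label (P (j - 1)) (P j))"
    by (simp add: S_def stems_def)
qed

end
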